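(* (i) For arbitrary parameters $a > 0$ and $b > 1$, with $\delta := (a+1)/(a+b)$, \[ \rho \bigl( \mathrm{Beta}(a,b), \mathrm{Gamma}(a,a+b) \bigr) \le (1-\delta)^{-1/2} \] and \[ d_{\mathrm{TV}} \bigl( \mathrm{Beta}(a,b), \mathrm{Gamma}(a,a+b) \bigr) \le 1 - (1-\delta)^{1/2} < \frac{\delta}{2-\delta} . \] (ii) For $a > 0$, $b > 1$ and arbitrary $c > 0$, \[ \rho \bigl( \mathrm{Beta}(a,b), \mathrm{Gamma}(a,c) \bigr) \ge \rho \bigl( \mathrm{Beta}(a,b), \mathrm{Gamma}(a,a+b-1) \bigr) . \] Moreover, with $\widetilde{\delta} := a/(a+b-1)$ (which satisfies $\widetilde{\delta} < \delta$), \[ \rho \bigl( \mathrm{Beta}(a,b), \mathrm{Gamma}(a,a+b-1) \bigr) \le (1-\widetilde{\delta})^{-1/2} \] and \[ d_{\mathrm{TV}} \bigl( \mathrm{Beta}(a,b), \mathrm{Gamma}(a,a+b-1) \bigr) \le 1 - (1-\widetilde{\delta})^{1/2} < \frac{\widetilde{\delta}}{2-\widetilde{\delta}} . \]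
   Context: $\mathrm{Beta}(a,b)$ is viewed as a distribution on $(0,\infty)$ with Lebesgue density $\beta_{a,b}(x) = \frac{\Gamma(a+b)}{\Gamma(a)\Gamma(b)} x^{a-1}(1-x)_+^{b-1}$, $x>0$. $\mathrm{Gamma}(a,c)$ is the gamma distribution with shape $a>0$ and rate $c>0$, with density $\gamma_{a,c}(x) = \frac{c^a}{\Gamma(a)} x^{a-1} e^{-cx}$, $x>0$. For probability measures $Q,P$ on $(\mathcal{X},\mathcal{A})$: $\rho(Q,P) := \sup_{A \in \mathcal{A}} Q(A)/P(A)$ with conventions $0/0 := 0$, $a/0 := \infty$ for $a>0$; $d_{\mathrm{TV}}(Q,P) := \sup_{A \in \mathcal{A}} |Q(A)-P(A)|$. *)

theory Defs
  imports "HOL-Probability.Probability" "HOL-Analysis.Gamma_Function"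
begin

definition beta_density :: "real \<Rightarrow> real \<Rightarrow> real \<Rightarrow> real" where
  "beta_density a b x =
     (if 0 < x \<and> x < 1
      then Gamma (a + b) / (Gamma a * Gamma b) * x powr (a - 1) * (1 - x) powr (b - 1)
      else 0)"

definition gamma_density :: "real \<Rightarrow> real \<Rightarrow> real \<Rightarrow> real" where
  "gamma_density a c x =
     (if 0 < x then c powr a / Gamma a * x powr (a - 1) * exp (- c * x) else 0)"

definition beta_dist :: "real \<Rightarrow> real \<Rightarrow> real measure" where
  "beta_dist a b = density lborel (\<lambda>x. ennreal (beta_density a b x))"

definition gamma_dist :: "real \<Rightarrow> real \<Rightarrow> real measure" where
  "gamma_dist a c = density lborel (\<lambda>x. ennreal (gamma_density a c x))"

definition ratio_conv :: "ennreal \<Rightarrow> ennreal \<Rightarrow> ennreal" where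
  "ratio_conv q p = (if p = 0 then (if q = 0 then 0 else \<infinity>) else q / p)"

definition rho :: "'a measure \<Rightarrow> 'a measure \<Rightarrow> ennreal" where
  "rho Q P = (SUP A \<in> sets P. ratio_conv (emeasure Q A) (emeasure P A))"

definition d_TV :: "'a measure \<Rightarrow> 'a measure \<Rightarrow> real" where
  "d_TV Q P = (SUP A \<in> sets P. \<bar>measure Q A - measure P A\<bar>)"

end

theory Submission
  imports Defs "HOL-Real_Asymp.Real_Asymp"
begin


lemma ln_trap:
  fixes x :: real assumes x: "x > 0"
  shows "ln (x+1) - ln x \<le> (2*x+1)/(2*x*(x+1))"
proof -
  define h where "h u = (1/2)*(1+u - 1/(1+u)) - ln (1+u)" for u :: real
  have "h 0 \<le> h (1/x)"
  proof (rule DERIV_nonneg_imp_nondecreasing[of 0 "1/x" h])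
    show "0 \<le> 1/x" using x by simp
  next
    fix t :: real assume t: "0 \<le> t" "t \<le> 1/x"
    have t1: "1 + t \<noteq> 0" "1 + t > 0" using t by auto
    have tt: "t*t \<ge> 0" "t*(t*2) \<ge> 0" using t by auto
    have n1: "1 + (t*t + t*2) \<noteq> 0" "2 + (t*4 + t*(t*2)) \<noteq> 0" using t tt
      by linarith+
    have "(h has_real_derivative ((1/2)*(1 + 1/(1+t)^2) - 1/(1+t))) (at t)"
      unfolding h_def using t
      apply (intro derivative_eq_intros)
      apply (rule refl | simp)+
      using t1 n1 by (simp add: field_simps) (simp add: algebra_simps power2_eq_square)
    moreover have "(1/2)*(1 + 1/(1+t)^2) - 1/(1+t) = (1/2)*(1 - 1/(1+t))^2"
    proof -
      define s where "s = 1/(1+t)"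
      have "1/(1+t)^2 = s^2" by (simp add: s_def power_divide)
      moreover have "(1/2)*(1+s^2) - s = (1/2)*(1-s)^2" by (simp add: power2_eq_square algebra_simps)
      ultimately show ?thesis by (simp add: s_def)
    qed
    ultimately have "(h has_real_derivative (1/2)*(1 - 1/(1+t))^2) (at t)" by metis
    moreover have "0 \<le> (1/2)*(1 - 1/(1+t))^2" by simp
    ultimately show "\<exists>y. (h has_real_derivative y) (at t) \<and> 0 \<le> y" by blast
  qed
  hence "ln (1 + 1/x) \<le> (1/2)*(1+1/x - 1/(1+1/x))" by (simp add: h_def)
  moreover have "ln (1 + 1/x) = ln (x+1) - ln x" using x
    by (simp add: ln_divide_pos[symmetric] field_simps)
  moreover have "(1/2)*(1+1/x - 1/(1+1/x)) = (2*x+1)/(2*x*(x+1))" using x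
    by (simp add: field_simps)
  ultimately show ?thesis by linarith
qed

definition Dg :: "real \<Rightarrow> real" where "Dg x = (x + 1/2) * (ln (x+1) - ln x) - 1"

lemma Dg_antimono:
  fixes x y :: real assumes x: "0 < x" and xy: "x \<le> y"
  shows "Dg y \<le> Dg x"
proof (rule DERIV_nonpos_imp_nonincreasing[OF xy])
  fix t assume t: "x \<le> t" "t \<le> y"
  hence t0: "t > 0" using x by simp
  have "(Dg has_real_derivative ((ln (t+1) - ln t) + (t+1/2)*(1/(t+1) - 1/t))) (at t)"
    unfolding Dg_def[abs_def] using t0
    apply (intro derivative_eq_intros)
    apply (rule refl | simp)+
    done
  moreover have "(ln (t+1) - ln t) + (t+1/2)*(1/(t+1) - 1/t) \<le> 0"
  proof -
    have "(t+1/2)*(1/(t+1) - 1/t) = - ((2*t+1)/(2*t*(t+1)))" using t0 by (simp add: field_simps)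
    thus ?thesis using ln_trap[OF t0] by simp
  qed
  ultimately show "\<exists>d. (Dg has_real_derivative d) (at t) \<and> d \<le> 0" by blast
qed

definition fG :: "real \<Rightarrow> real" where "fG x = ln (Gamma (x+1)) - (x + 1/2) * ln x + x"

lemma fG_step: assumes x: "x > 0" shows "fG x - fG (x+1) = Dg x"
proof -
  have g: "Gamma (x + 1 + 1) = (x+1) * Gamma (x+1)"
    by (rule Gamma_plus1) (use x in \<open>auto elim!: nonpos_Ints_cases\<close>)
  have gp: "Gamma (x+1) > 0" using x by simp
  have "ln (Gamma (x + 1 + 1)) = ln (x+1) + ln (Gamma (x+1))"
    unfolding g using x gp by (intro ln_mult_pos) auto
  thus ?thesis unfolding fG_def Dg_def by (simp add: algebra_simps)
qed

lemma fG_tele: assumes x: "x > 0" shows "fG x - fG (x + real n) = (\<Sum>k<n. Dg (x + real k))"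
proof (induction n)
  case (Suc n)
  have "fG (x + real n) - fG (x + real n + 1) = Dg (x + real n)"
    by (rule fG_step) (use x in simp)
  thus ?case using Suc by (simp add: algebra_simps)
qed simp

lemma asym2: "(\<lambda>n. (x + real n + 1/2) * (ln (x + real n) - ln (real n))) \<longlonglongrightarrow> (x::real)"
  by real_asymp

lemma G_lim:
  fixes x :: real assumes x: "x > 0"
  shows "(\<lambda>n. fact n * real n powr x / Gamma (x + real n + 1)) \<longlonglongrightarrow> 1"
proof -
  have xn: "x \<notin> \<int>\<^sub>\<le>\<^sub>0" using x by (auto elim!: nonpos_Ints_cases)
  have gx: "Gamma x > 0" using x by simp
  have "(\<lambda>n. Gamma_series x n / Gamma x) \<longlonglongrightarrow> Gamma x / Gamma x"
    by (intro tendsto_intros) (use gx in auto)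
  hence L: "(\<lambda>n. Gamma_series x n / Gamma x) \<longlonglongrightarrow> 1" using gx by simp
  show ?thesis
  proof (rule Lim_transform_eventually[OF L])
    show "eventually (\<lambda>n. Gamma_series x n / Gamma x =
            fact n * real n powr x / Gamma (x + real n + 1)) sequentially"
      using eventually_gt_at_top[of "0::nat"]
    proof eventually_elim
      case (elim n)
      have p: "pochhammer x (n+1) = Gamma (x + real n + 1) / Gamma x"
        using pochhammer_Gamma[OF xn, of "n+1"] by (simp add: add_ac)
      have "exp (x * ln (real n)) = real n powr x" using elim by (simp add: powr_def)
      thus ?case unfolding Gamma_series_def p using gx by simp
    qed
  qed
qed

lemma fG_lim:
  fixes x :: real assumes x: "x > 0"
  shows "(\<lambda>n. fG (x + real n) - fG (real n)) \<longlonglongrightarrow> 0"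
proof -
  define G where "G n = fact n * real n powr x / Gamma (x + real n + 1)" for n
  have "(\<lambda>n. - ln (G n) - ((x + real n + 1/2) * (ln (x + real n) - ln (real n)) - x))
          \<longlonglongrightarrow> - ln 1 - (x - x)"
    unfolding G_def by (intro tendsto_intros G_lim asym2 x) simp
  hence L: "(\<lambda>n. - ln (G n) - ((x + real n + 1/2) * (ln (x + real n) - ln (real n)) - x))
          \<longlonglongrightarrow> 0" by simp
  show ?thesis
  proof (rule Lim_transform_eventually[OF L])
    show "eventually (\<lambda>n. - ln (G n) - ((x + real n + 1/2) * (ln (x + real n) - ln (real n)) - x) =
            fG (x + real n) - fG (real n)) sequentially"
      using eventually_gt_at_top[of "0::nat"]
    proof eventually_elim
      case (elim n)
      have g1: "Gamma (x + real n + 1) > 0" using x by simp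
      have gf: "Gamma (real n + 1) = fact n"
        using Gamma_fact[of n] by (simp add: add_ac)
      have "ln (G n) = ln (fact n) + x * ln (real n) - ln (Gamma (x + real n + 1))"
        unfolding G_def using elim g1
        by (simp add: ln_div ln_mult ln_powr)
      thus ?case unfolding fG_def gf by (simp add: algebra_simps)
    qed
  qed
qed

lemma fG_mono:
  fixes x y :: real assumes x: "0 < x" and xy: "x \<le> y"
  shows "fG y \<le> fG x"
proof -
  have y: "y > 0" using x xy by simp
  have "(\<lambda>n. (fG (y + real n) - fG (real n)) - (fG (x + real n) - fG (real n))) \<longlonglongrightarrow> 0 - 0"
    by (intro tendsto_intros fG_lim x y)
  moreover have "\<forall>n\<ge>0. fG y - fG x \<le> (fG (y + real n) - fG (real n)) - (fG (x + real n) - fG (real n))"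
  proof (intro allI impI)
    fix n :: nat
    have "(\<Sum>k<n. Dg (y + real k)) \<le> (\<Sum>k<n. Dg (x + real k))"
      by (intro sum_mono Dg_antimono) (use x xy in auto)
    thus "fG y - fG x \<le> (fG (y + real n) - fG (real n)) - (fG (x + real n) - fG (real n))"
      using fG_tele[OF x, of n] fG_tele[OF y, of n] by simp
  qed
  ultimately have "fG y - fG x \<le> 0 - 0" by (intro LIMSEQ_le_const) auto
  thus ?thesis by simp
qed



lemma beta_meas[measurable]: "beta_density a b \<in> borel_measurable borel"
  unfolding beta_density_def[abs_def] by measurable

lemma gamma_meas[measurable]: "gamma_density a c \<in> borel_measurable borel"
  unfolding gamma_density_def[abs_def] by measurable

lemma dens_le:
  fixes q p :: "real \<Rightarrow> real"
  assumes [measurable]: "q \<in> borel_measurable borel" "p \<in> borel_measurable borel"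
    and le: "\<And>x. q x \<le> M * p x" and M: "M \<ge> 0" and p0: "\<And>x. p x \<ge> 0"
    and A: "A \<in> sets borel"
  shows "emeasure (density lborel (\<lambda>x. ennreal (q x))) A
          \<le> ennreal M * emeasure (density lborel (\<lambda>x. ennreal (p x))) A"
proof -
  have "emeasure (density lborel (\<lambda>x. ennreal (q x))) A = (\<integral>\<^sup>+x. ennreal (q x) * indicator A x \<partial>lborel)"
    using A by (simp add: emeasure_density)
  also have "\<dots> \<le> (\<integral>\<^sup>+x. ennreal M * (ennreal (p x) * indicator A x) \<partial>lborel)"
    by (intro nn_integral_mono) (use le M p0 in \<open>auto simp: indicator_def ennreal_mult[symmetric] intro!: ennreal_leI\<close>)
  also have "\<dots> = ennreal M * (\<integral>\<^sup>+x. ennreal (p x) * indicator A x \<partial>lborel)"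
    using A by (intro nn_integral_cmult) auto
  also have "\<dots> = ennreal M * emeasure (density lborel (\<lambda>x. ennreal (p x))) A"
    using A by (simp add: emeasure_density)
  finally show ?thesis .
qed

lemma rho_le_dens:
  fixes q p :: "real \<Rightarrow> real"
  assumes [measurable]: "q \<in> borel_measurable borel" "p \<in> borel_measurable borel"
    and le: "\<And>x. q x \<le> M * p x" and M: "M \<ge> 0" and p0: "\<And>x. p x \<ge> 0"
  shows "rho (density lborel (\<lambda>x. ennreal (q x))) (density lborel (\<lambda>x. ennreal (p x))) \<le> ennreal M"
  unfolding rho_def
proof (rule SUP_least)
  fix A assume "A \<in> sets (density lborel (\<lambda>x. ennreal (p x)))"
  hence A: "A \<in> sets borel" by simp
  define QA where "QA = emeasure (density lborel (\<lambda>x. ennreal (q x))) A"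
  define PA where "PA = emeasure (density lborel (\<lambda>x. ennreal (p x))) A"
  have le': "QA \<le> ennreal M * PA" unfolding QA_def PA_def by (rule dens_le[OF assms(1,2) le M p0 A])
  show "ratio_conv QA PA \<le> ennreal M"
  proof (cases "PA = 0")
    case True
    with le' have "QA = 0" by simp
    with True show ?thesis by (simp add: ratio_conv_def)
  next
    case False
    hence "PA > 0" by (simp add: zero_less_iff_neq_zero)
    moreover have "QA \<le> PA * ennreal M" using le' by (simp add: mult.commute)
    ultimately have "QA / PA \<le> ennreal M" by (rule divide_le_posI_ennreal)
    with False show ?thesis by (simp add: ratio_conv_def)
  qed
qed

lemma rho_ge_dens:
  fixes q p :: "real \<Rightarrow> real"
  assumes [measurable]: "q \<in> borel_measurable borel" "p \<in> borel_measurable borel"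
    and A[measurable]: "A \<in> sets borel"
    and ge: "\<And>x. x \<in> A \<Longrightarrow> K * p x \<le> q x" and K: "K \<ge> 0" and p0: "\<And>x. p x \<ge> 0"
    and P0: "emeasure (density lborel (\<lambda>x. ennreal (p x))) A \<noteq> 0"
    and Pinf: "emeasure (density lborel (\<lambda>x. ennreal (p x))) A \<noteq> \<infinity>"
  shows "ennreal K \<le> rho (density lborel (\<lambda>x. ennreal (q x))) (density lborel (\<lambda>x. ennreal (p x)))"
proof -
  define QA where "QA = emeasure (density lborel (\<lambda>x. ennreal (q x))) A"
  define PA where "PA = emeasure (density lborel (\<lambda>x. ennreal (p x))) A"
  have "ennreal K * PA = (\<integral>\<^sup>+x. ennreal K * (ennreal (p x) * indicator A x) \<partial>lborel)"
    unfolding PA_def using A by (simp add: emeasure_density nn_integral_cmult)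
  also have "\<dots> \<le> (\<integral>\<^sup>+x. ennreal (q x) * indicator A x \<partial>lborel)"
    by (intro nn_integral_mono) (use ge K p0 in \<open>auto simp: indicator_def ennreal_mult[symmetric] intro!: ennreal_leI\<close>)
  also have "\<dots> = QA" unfolding QA_def using A by (simp add: emeasure_density)
  finally have le: "ennreal K * PA \<le> QA" .
  have "ennreal K = ennreal K * PA / PA" using P0 Pinf unfolding PA_def
    by (simp add: ennreal_mult_divide_eq)
  also have "\<dots> \<le> QA / PA" by (rule divide_right_mono_ennreal[OF le])
  also have "\<dots> = ratio_conv QA PA" using P0 unfolding PA_def by (simp add: ratio_conv_def)
  also have "\<dots> \<le> rho (density lborel (\<lambda>x. ennreal (q x))) (density lborel (\<lambda>x. ennreal (p x)))"
    unfolding rho_def QA_def PA_def by (rule SUP_upper) (use A in simp)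
  finally show ?thesis .
qed

lemma dTV_le:
  assumes Q: "prob_space Q" and P: "prob_space P" and sQP: "sets Q = sets P"
    and le: "\<And>A. A \<in> sets P \<Longrightarrow> measure Q A \<le> M * measure P A" and M: "M \<ge> 1"
  shows "d_TV Q P \<le> 1 - 1/M"
  unfolding d_TV_def
proof (rule cSUP_least)
  show "sets P \<noteq> {}" using sets.empty_sets by blast
  fix A assume A: "A \<in> sets P"
  have sp: "space Q = space P" using sQP by (rule sets_eq_imp_space_eq)
  have key: "measure Q B - measure P B \<le> 1 - 1/M" if B: "B \<in> sets P" for B
  proof -
    define qB where "qB = measure Q B"
    define pB where "pB = measure P B"
    have h0: "qB \<le> M * pB" using le[OF B] unfolding qB_def pB_def .
    have "qB / M \<le> pB" using h0 M by (simp add: field_simps)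
    hence h1: "qB - pB \<le> qB - qB / M" by linarith
    have q1: "qB \<le> 1" unfolding qB_def using prob_space.prob_le_1[OF Q] .
    have h2: "qB - qB / M = qB * (1 - 1/M)" by (simp add: algebra_simps)
    have m1: "0 \<le> 1 - 1/M" using M by (simp add: field_simps)
    have h3: "qB * (1 - 1/M) \<le> 1 - 1/M"
      using mult_right_mono[OF q1 m1] by simp
    show ?thesis using h1 h2 h3 unfolding qB_def[symmetric] pB_def[symmetric] by linarith
  qed
  have Ac: "space P - A \<in> sets P" using A by auto
  have cQ: "measure Q (space P - A) = 1 - measure Q A"
    using prob_space.prob_compl[OF Q, of A] A sQP sp by simp
  have cP: "measure P (space P - A) = 1 - measure P A"
    using prob_space.prob_compl[OF P, of A] A by simp
  have "measure P A - measure Q A \<le> 1 - 1/M" using key[OF Ac] cQ cP by simp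
  with key[OF A] show "\<bar>measure Q A - measure P A\<bar> \<le> 1 - 1/M" by linarith
qed



lemma Gamma_real_ne0 [simp]: "x > 0 \<Longrightarrow> Gamma (x::real) \<noteq> 0"
  using Gamma_real_pos[of x] by linarith

lemma gamma_norm:
  fixes a c :: real assumes a: "a > 0" and c: "c > 0"
  shows "(\<integral>\<^sup>+x. ennreal (gamma_density a c x) \<partial>lborel) = 1"
proof -
  define g where "g t = indicator {0..} t * t powr (a - 1) / exp t" for t :: real
  have gm[measurable]: "g \<in> borel_measurable borel" unfolding g_def[abs_def] by measurable
  have G: "ennreal (Gamma a) = (\<integral>\<^sup>+t. ennreal (g t) \<partial>lborel)"
    unfolding g_def by (rule Gamma_conv_nn_integral_real[OF a])
  also have "\<dots> = ennreal \<bar>c\<bar> * (\<integral>\<^sup>+x. ennreal (g (0 + c * x)) \<partial>lborel)"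
    by (rule nn_integral_real_affine) (use c in auto)
  finally have G2: "ennreal (Gamma a) = ennreal c * (\<integral>\<^sup>+x. ennreal (g (c * x)) \<partial>lborel)"
    using c by simp
  have pt: "gamma_density a c x = (c / Gamma a) * g (c * x)" for x
  proof (cases "x > 0")
    case True
    have "(c * x) powr (a - 1) = c powr (a - 1) * x powr (a - 1)"
      using True c by (simp add: powr_mult)
    moreover have "c powr a = c powr (a - 1) * c" using c by (simp add: powr_diff)
    ultimately show ?thesis using True c
      unfolding gamma_density_def g_def by (simp add: exp_minus field_simps)
  next
    case False
    hence "c * x \<le> 0" using c by (simp add: mult_nonpos_nonneg mult_le_0_iff)
    then show ?thesis using False unfolding gamma_density_def g_def
      by (cases "c * x = 0") (auto simp: indicator_def)
  qed
  have gn: "\<And>x. g x \<ge> 0" unfolding g_def by (simp add: indicator_def)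
  have "(\<integral>\<^sup>+x. ennreal (gamma_density a c x) \<partial>lborel)
        = (\<integral>\<^sup>+x. ennreal (c / Gamma a) * ennreal (g (c * x)) \<partial>lborel)"
    unfolding pt using c a gn
    by (intro nn_integral_cong) (subst ennreal_mult[symmetric]; simp)
  also have "\<dots> = ennreal (c / Gamma a) * (\<integral>\<^sup>+x. ennreal (g (c * x)) \<partial>lborel)"
    by (rule nn_integral_cmult) measurable
  also have "\<dots> = ennreal (1 / Gamma a) * (ennreal c * (\<integral>\<^sup>+x. ennreal (g (c * x)) \<partial>lborel))"
    using c a by (simp add: ennreal_mult[symmetric] mult.assoc[symmetric])
  also have "\<dots> = ennreal (1 / Gamma a) * ennreal (Gamma a)" unfolding G2 ..
  also have "\<dots> = 1" using a by (simp add: ennreal_mult[symmetric])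
  finally show ?thesis .
qed

lemma beta_norm:
  fixes a b :: real assumes a: "a > 0" and b: "b > 0"
  shows "(\<integral>\<^sup>+x. ennreal (beta_density a b x) \<partial>lborel) = 1"
proof -
  define h where "h t = t powr (a - 1) * (1 - t) powr (b - 1)" for t :: real
  define C where "C = Gamma (a + b) / (Gamma a * Gamma b)"
  have C0: "C > 0" unfolding C_def using a b by simp
  have I: "(\<integral>\<^sup>+x. ennreal (indicator {0..1} x * h x) \<partial>lborel) = ennreal (Beta a b)"
    unfolding h_def by (rule nn_integral_has_integral_lebesgue[OF _ has_integral_Beta_real[OF a b]]) auto
  have pt: "beta_density a b x = C * (indicator {0..1} x * h x)" for x
    unfolding beta_density_def C_def h_def by (auto simp: indicator_def)
  have hn: "\<And>x. indicator {0..1} x * h x \<ge> 0" unfolding h_def by (simp add: indicator_def)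
  have "(\<integral>\<^sup>+x. ennreal (beta_density a b x) \<partial>lborel)
        = (\<integral>\<^sup>+x. ennreal C * ennreal (indicator {0..1} x * h x) \<partial>lborel)"
    unfolding pt using C0 hn by (simp add: ennreal_mult)
  also have "\<dots> = ennreal C * ennreal (Beta a b)"
    unfolding I[symmetric] by (rule nn_integral_cmult) (unfold h_def, measurable)
  also have "\<dots> = 1" using a b C0 Gamma_real_ne0[of a] Gamma_real_ne0[of b] Gamma_real_ne0[of "a+b"]
    by (simp add: ennreal_mult[symmetric] C_def Beta_altdef rGamma_inverse_Gamma field_simps)
  finally show ?thesis .
qed

lemma prob_beta: "a > 0 \<Longrightarrow> b > 0 \<Longrightarrow> prob_space (beta_dist a b)"
  unfolding beta_dist_def by (rule prob_spaceI) (simp add: emeasure_density beta_norm)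

lemma prob_gamma: "a > 0 \<Longrightarrow> c > 0 \<Longrightarrow> prob_space (gamma_dist a c)"
  unfolding gamma_dist_def by (rule prob_spaceI) (simp add: emeasure_density gamma_norm)



lemma ln_strict: fixes y :: real assumes y: "y > 0" "y \<noteq> 1" shows "ln y < y - 1"
proof -
  define s where "s = sqrt y"
  have s0: "s > 0" using y by (simp add: s_def)
  have ss: "s * s = y" using y by (simp add: s_def)
  have s1: "s \<noteq> 1" using y ss by auto
  have "ln y = 2 * ln s" using ss s0 by (metis ln_mult_pos mult_2)
  moreover have "ln s \<le> s - 1" using s0 by (rule ln_le_minus_one)
  moreover have "0 < (s - 1) * (s - 1)" using s1 by (cases "s < 1") (auto simp: zero_less_mult_iff)
  ultimately show ?thesis using ss by (simp add: algebra_simps)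
qed

lemma sqrt_ineq: fixes d :: real assumes d: "0 < d" "d < 1"
  shows "1 - (1 - d) powr (1/2) < d / (2 - d)"
proof -
  define s where "s = sqrt (1 - d)"
  have p: "(1 - d) powr (1/2) = s" using d by (simp add: s_def powr_half_sqrt)
  have s0: "0 < s" "s < 1" using d by (auto simp: s_def)
  have ss: "s * s = 1 - d" using d by (simp add: s_def)
  have dd: "d = 1 - s * s" using ss by simp
  have pos: "0 < s * ((1 - s) * (1 - s))" using s0 by simp
  have "(1 - s) * (1 + s * s) < 1 - s * s" using pos by (simp add: algebra_simps)
  moreover have "0 < 1 + s * s" using s0 by (simp add: add_pos_nonneg)
  ultimately have "1 - s < (1 - s * s) / (1 + s * s)" by (simp add: pos_less_divide_eq)
  moreover have "2 - d = 1 + s * s" using dd by simp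
  ultimately show ?thesis unfolding p using dd by simp
qed



definition Lf :: "real \<Rightarrow> real \<Rightarrow> real \<Rightarrow> real \<Rightarrow> real" where
  "Lf a b c x = ln (Gamma (a+b)) - ln (Gamma b) - a * ln c + (b-1) * ln (1-x) + c*x"

lemma exp_Lf:
  assumes a: "a > 0" and b: "b > 0" and c: "c > 0" and x: "x < 1"
  shows "exp (Lf a b c x) = Gamma (a+b) / Gamma b / c powr a * (1-x) powr (b-1) * exp (c*x)"
  using a b c x unfolding Lf_def
  by (simp add: exp_add exp_diff powr_def)

lemma beta_fact:
  assumes a: "a > 0" and b: "b > 0" and c: "c > 0" and x: "0 < x" "x < 1"
  shows "beta_density a b x = exp (Lf a b c x) * gamma_density a c x"
proof -
  have cp: "c powr a > 0" using c by simp
  have e: "exp (c*x) * exp (- c * x) = 1" by (simp add: exp_minus field_simps)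
  show ?thesis unfolding exp_Lf[OF a b c x(2)] beta_density_def gamma_density_def
    using x cp a b e by (simp add: field_simps)
qed

lemma key_bound:
  fixes b c x :: real
  assumes b: "b > 1" and c: "c > 0" and x: "x < 1"
  shows "(b-1) * ln (1-x) + c*x \<le> (b-1) * ln (b-1) - (b-1) * ln c + c - (b-1)"
proof -
  define y where "y = c * (1-x) / (b-1)"
  have y0: "y > 0" using b c x by (simp add: y_def)
  have ly: "ln y = ln c + ln (1-x) - ln (b-1)"
    using b c x by (simp add: y_def ln_mult_pos ln_divide_pos)
  have "(b-1) * ln y \<le> (b-1) * (y - 1)"
    using ln_le_minus_one[OF y0] b by (intro mult_left_mono) auto
  moreover have "(b-1) * y = c - c * x" using b by (simp add: y_def field_simps)
  ultimately show ?thesis unfolding ly by (simp add: algebra_simps)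
qed

lemma Lf_bound1:
  assumes a: "a > 0" and b: "b > 1" and x: "0 < x" "x < 1"
  shows "Lf a b (a+b) x \<le> - (1/2) * ln (1 - (a+1)/(a+b))"
proof -
  define w where "w = a + b"
  define u where "u = b - 1"
  have w0: "w > 0" and u0: "u > 0" and uw: "u \<le> w" using a b by (auto simp: w_def u_def)
  have kb: "u * ln (1-x) + w*x \<le> u * ln u - u * ln w + w - u"
    using key_bound[OF b _ x(2), of w] w0 unfolding u_def by simp
  have gw: "Gamma (w + 1) = w * Gamma w"
    by (rule Gamma_plus1) (use w0 in \<open>auto elim!: nonpos_Ints_cases\<close>)
  have lgw: "ln (Gamma w) = ln (Gamma (w+1)) - ln w"
    unfolding gw using w0 by (simp add: ln_mult_pos)
  have fm: "fG w \<le> fG u" by (rule fG_mono[OF u0 uw])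
  have bu: "u + 1 = b" by (simp add: u_def)
  have d: "1 - (a+1)/(a+b) = u / w" using a b by (simp add: u_def w_def field_simps)
  have ld: "ln (u / w) = ln u - ln w" using u0 w0 by (simp add: ln_divide_pos)
  have wau: "w = a + u + 1" by (simp add: w_def u_def)
  have "Lf a b w x = ln (Gamma w) - ln (Gamma b) - a * ln w + u * ln (1-x) + w*x"
    unfolding Lf_def w_def u_def by simp
  also have "\<dots> \<le> ln (Gamma (w+1)) - ln w - ln (Gamma b) - a * ln w + u * ln u - u * ln w + w - u"
    using kb lgw by simp
  also have "\<dots> \<le> - (1/2) * (ln u - ln w)"
  proof -
    have "ln (Gamma (w+1)) - (w + 1/2) * ln w + w \<le> ln (Gamma b) - (u + 1/2) * ln u + u"
      using fm unfolding fG_def bu .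
    moreover have "(w + 1/2) * ln w = ln w + a * ln w + u * ln w + (1/2) * ln w"
      unfolding wau by (simp add: algebra_simps)
    moreover have "(u + 1/2) * ln u = u * ln u + (1/2) * ln u" by (simp add: algebra_simps)
    ultimately show ?thesis using wau by (simp add: algebra_simps)
  qed
  finally have "Lf a b w x \<le> - (1/2) * (ln u - ln w)" .
  thus ?thesis unfolding d ld by (simp add: w_def)
qed

lemma Lf_bound2a:
  assumes a: "a > 0" and b: "b > 1" and x: "x < 1"
  shows "Lf a b (a+b-1) x \<le> Lf a b (a+b-1) (a/(a+b-1))"
proof -
  define v where "v = a + b - 1"
  define u where "u = b - 1"
  have v0: "v > 0" and u0: "u > 0" using a b by (auto simp: v_def u_def)
  have kb: "u * ln (1-x) + v * x \<le> u * ln u - u * ln v + v - u"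
    using key_bound[OF b _ x, of v] v0 unfolding u_def by simp
  have e1: "1 - a/v = u/v" using v0 by (simp add: u_def v_def field_simps)
  have e2: "v * (a/v) = a" using v0 by simp
  have ld: "ln (u / v) = ln u - ln v" using u0 v0 by (simp add: ln_divide_pos)
  have "u * ln (1 - a/v) + v * (a/v) = u * ln u - u * ln v + v - u"
    unfolding e1 e2 ld by (simp add: algebra_simps u_def v_def)
  with kb show ?thesis unfolding Lf_def v_def[symmetric] u_def[symmetric] by simp
qed

lemma Lf_bound2b:
  assumes a: "a > 0" and b: "b > 1"
  shows "Lf a b (a+b-1) (a/(a+b-1)) \<le> - (1/2) * ln (1 - a/(a+b-1))"
proof -
  define v where "v = a + b - 1"
  define u where "u = b - 1"
  have v0: "v > 0" and u0: "u > 0" and uv: "u \<le> v" using a b by (auto simp: v_def u_def)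
  have e1: "1 - a/v = u/v" using v0 by (simp add: u_def v_def field_simps)
  have e2: "v * (a/v) = a" using v0 by simp
  have ld: "ln (u / v) = ln u - ln v" using u0 v0 by (simp add: ln_divide_pos)
  have fm: "fG v \<le> fG u" by (rule fG_mono[OF u0 uv])
  have bu: "u + 1 = b" by (simp add: u_def)
  have vb: "v + 1 = a + b" by (simp add: v_def)
  have vau: "v = a + u" by (simp add: v_def u_def)
  have "Lf a b v (a/v) = ln (Gamma (v+1)) - ln (Gamma b) - a * ln v + u * (ln u - ln v) + a"
    unfolding Lf_def u_def[symmetric] vb[symmetric] e1 e2 ld by simp
  also have "\<dots> \<le> - (1/2) * (ln u - ln v)"
  proof -
    have "ln (Gamma (v+1)) - (v + 1/2) * ln v + v \<le> ln (Gamma b) - (u + 1/2) * ln u + u"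
      using fm unfolding fG_def bu .
    moreover have "(v + 1/2) * ln v = a * ln v + u * ln v + (1/2) * ln v"
      unfolding vau by (simp add: algebra_simps)
    moreover have "(u + 1/2) * ln u = u * ln u + (1/2) * ln u" by (simp add: algebra_simps)
    ultimately show ?thesis using vau by (simp add: algebra_simps)
  qed
  finally have "Lf a b v (a/v) \<le> - (1/2) * (ln u - ln v)" .
  thus ?thesis unfolding e1 ld v_def[symmetric] .
qed

lemma Lf_bound2c:
  assumes a: "a > 0" and b: "b > 1" and c: "c > 0" "c \<noteq> a+b-1"
  shows "Lf a b (a+b-1) (a/(a+b-1)) < Lf a b c (a/(a+b-1))"
proof -
  define v where "v = a + b - 1"
  have v0: "v > 0" using a b by (simp add: v_def)
  have y: "c / v > 0" "c / v \<noteq> 1" using c v0 by (auto simp: v_def)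
  have "ln (c/v) < c/v - 1" by (rule ln_strict[OF y])
  hence "a * ln (c/v) < a * (c/v - 1)" using a by simp
  moreover have "ln (c/v) = ln c - ln v" using c v0 by (simp add: ln_divide_pos)
  moreover have "a * (c/v - 1) = c * (a/v) - v * (a/v)" using v0 by (simp add: field_simps)
  ultimately show ?thesis unfolding Lf_def v_def[symmetric] by (simp add: algebra_simps)
qed



lemma gamma_nonneg: "a > 0 \<Longrightarrow> c > 0 \<Longrightarrow> gamma_density a c x \<ge> 0"
  unfolding gamma_density_def by simp

lemma gamma_pos: "a > 0 \<Longrightarrow> c > 0 \<Longrightarrow> x > 0 \<Longrightarrow> gamma_density a c x > 0"
  unfolding gamma_density_def by simp

lemma pw_le:
  assumes a: "a > 0" and b: "b > 1" and c: "c > 0" and M: "M \<ge> 0"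
    and bd: "\<And>x. 0 < x \<Longrightarrow> x < 1 \<Longrightarrow> exp (Lf a b c x) \<le> M"
  shows "beta_density a b x \<le> M * gamma_density a c x"
proof (cases "0 < x \<and> x < 1")
  case True
  hence "beta_density a b x = exp (Lf a b c x) * gamma_density a c x"
    using beta_fact[OF a _ c] b by simp
  also have "\<dots> \<le> M * gamma_density a c x"
    using bd True gamma_nonneg[OF a c] by (intro mult_right_mono) auto
  finally show ?thesis .
next
  case False
  hence "beta_density a b x = 0" unfolding beta_density_def by auto
  thus ?thesis using M gamma_nonneg[OF a c] by simp
qed

lemma rho_upper:
  assumes a: "a > 0" and b: "b > 1" and c: "c > 0" and M: "M \<ge> 0"
    and bd: "\<And>x. 0 < x \<Longrightarrow> x < 1 \<Longrightarrow> exp (Lf a b c x) \<le> M"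
  shows "rho (beta_dist a b) (gamma_dist a c) \<le> ennreal M"
  unfolding beta_dist_def gamma_dist_def
  by (rule rho_le_dens) (use pw_le[OF a b c M bd] M gamma_nonneg[OF a c] in auto)

lemma dTV_upper:
  assumes a: "a > 0" and b: "b > 1" and c: "c > 0" and M: "M \<ge> 1"
    and bd: "\<And>x. 0 < x \<Longrightarrow> x < 1 \<Longrightarrow> exp (Lf a b c x) \<le> M"
  shows "d_TV (beta_dist a b) (gamma_dist a c) \<le> 1 - 1/M"
proof (rule dTV_le)
  show Q: "prob_space (beta_dist a b)" using prob_beta a b by simp
  show P: "prob_space (gamma_dist a c)" using prob_gamma a c by simp
  show "sets (beta_dist a b) = sets (gamma_dist a c)" by (simp add: beta_dist_def gamma_dist_def)
  show "M \<ge> 1" by fact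
  fix A assume "A \<in> sets (gamma_dist a c)"
  hence A: "A \<in> sets borel" by (simp add: gamma_dist_def)
  have M0: "M \<ge> 0" using M by simp
  have le: "emeasure (beta_dist a b) A \<le> ennreal M * emeasure (gamma_dist a c) A"
    unfolding beta_dist_def gamma_dist_def
    by (rule dens_le[OF _ _ _ M0 _ A]) (use pw_le[OF a b c M0 bd] gamma_nonneg[OF a c] in auto)
  have eQ: "emeasure (beta_dist a b) A = ennreal (measure (beta_dist a b) A)"
    using prob_space.emeasure_le_1[OF Q, of A] by (intro emeasure_eq_ennreal_measure) (auto simp: top_unique)
  have eP: "emeasure (gamma_dist a c) A = ennreal (measure (gamma_dist a c) A)"
    using prob_space.emeasure_le_1[OF P, of A] by (intro emeasure_eq_ennreal_measure) (auto simp: top_unique)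
  have "ennreal (measure (beta_dist a b) A) \<le> ennreal (M * measure (gamma_dist a c) A)"
    using le unfolding eQ eP using M0 by (simp add: ennreal_mult)
  thus "measure (beta_dist a b) A \<le> M * measure (gamma_dist a c) A"
    using M0 by (simp add: ennreal_le_iff)
qed

lemma rho_lower:
  assumes a: "a > 0" and b: "b > 1" and c: "c > 0" "c \<noteq> a+b-1"
  shows "ennreal (exp (Lf a b (a+b-1) (a/(a+b-1)))) \<le> rho (beta_dist a b) (gamma_dist a c)"
proof -
  define d where "d = a/(a+b-1)"
  define K where "K = exp (Lf a b (a+b-1) d)"
  have d01: "0 < d" "d < 1" using a b by (auto simp: d_def field_simps)
  have lt: "K < exp (Lf a b c d)" unfolding K_def d_def using Lf_bound2c[OF a b c] by simp
  have "isCont (\<lambda>x. exp (Lf a b c x)) d"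
    unfolding Lf_def using d01 by (intro continuous_intros) auto
  hence "eventually (\<lambda>x. K < exp (Lf a b c x)) (at d)"
    using lt unfolding isCont_def by (rule order_tendstoD(1))
  then obtain r where r: "r > 0" and rK: "\<And>x. x \<noteq> d \<Longrightarrow> dist x d < r \<Longrightarrow> K < exp (Lf a b c x)"
    unfolding eventually_at by auto
  define e where "e = min r (1 - d)"
  have e0: "e > 0" using r d01 by (simp add: e_def)
  define A where "A = {d<..<d+e}"
  have Ain: "\<And>x. x \<in> A \<Longrightarrow> 0 < x \<and> x < 1 \<and> K < exp (Lf a b c x)"
  proof -
    fix x assume "x \<in> A"
    hence x: "d < x" "x < d + e" by (auto simp: A_def)
    have "x \<noteq> d" "dist x d < r" using x e0 by (auto simp: dist_real_def e_def)
    thus "0 < x \<and> x < 1 \<and> K < exp (Lf a b c x)" using x d01 rK by (auto simp: e_def)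
  qed
  have Ab[measurable]: "A \<in> sets borel" by (simp add: A_def)
  have Pne0: "emeasure (density lborel (\<lambda>x. ennreal (gamma_density a c x))) A \<noteq> 0"
  proof
    assume "emeasure (density lborel (\<lambda>x. ennreal (gamma_density a c x))) A = 0"
    hence "(\<integral>\<^sup>+x. ennreal (gamma_density a c x) * indicator A x \<partial>lborel) = 0"
      by (simp add: emeasure_density)
    hence z: "emeasure lborel {x \<in> space lborel. ennreal (gamma_density a c x) * indicator A x \<noteq> 0} = 0"
      by (subst (asm) nn_integral_0_iff) auto
    have "A \<subseteq> {x \<in> space lborel. ennreal (gamma_density a c x) * indicator A x \<noteq> 0}"
    proof
      fix x assume xA: "x \<in> A"
      hence "gamma_density a c x > 0" using Ain gamma_pos[OF a c(1)] by auto
      thus "x \<in> {x \<in> space lborel. ennreal (gamma_density a c x) * indicator A x \<noteq> 0}"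
        using xA by (simp add: indicator_def)
    qed
    hence "emeasure lborel A \<le> emeasure lborel {x \<in> space lborel. ennreal (gamma_density a c x) * indicator A x \<noteq> 0}"
      by (rule emeasure_mono) measurable
    hence "emeasure lborel A \<le> 0" using z by simp
    moreover have "emeasure lborel A = ennreal e" using e0 by (simp add: A_def)
    ultimately show False using e0 by simp
  qed
  have Pinf: "emeasure (density lborel (\<lambda>x. ennreal (gamma_density a c x))) A \<noteq> \<infinity>"
    using prob_space.emeasure_le_1[OF prob_gamma[OF a c(1)], of A] unfolding gamma_dist_def
    by (auto simp: top_unique)
  have "ennreal K \<le> rho (density lborel (\<lambda>x. ennreal (beta_density a b x)))
                        (density lborel (\<lambda>x. ennreal (gamma_density a c x)))"
  proof (rule rho_ge_dens[OF _ _ Ab _ _ _ Pne0 Pinf])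
    fix x assume "x \<in> A"
    with Ain have x: "0 < x" "x < 1" and kx: "K < exp (Lf a b c x)" by auto
    have "K * gamma_density a c x \<le> exp (Lf a b c x) * gamma_density a c x"
      using kx gamma_nonneg[OF a c(1)] by (intro mult_right_mono) auto
    also have "\<dots> = beta_density a b x" using beta_fact[OF a _ c(1) x] b by simp
    finally show "K * gamma_density a c x \<le> beta_density a b x" .
  qed (auto simp: K_def gamma_nonneg[OF a c(1)])
  thus ?thesis unfolding K_def d_def beta_dist_def gamma_dist_def .
qed



lemma powr_facts:
  fixes t :: real assumes t: "0 < t" "t < 1"
  shows "t powr (-1/2) = exp (- (1/2) * ln t)" "t powr (-1/2) \<ge> 1"
        "1 - 1 / t powr (-1/2) = 1 - t powr (1/2)"
proof -
  show e: "t powr (-1/2) = exp (- (1/2) * ln t)" using t by (simp add: powr_def)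
  have "ln t < 0" using t by simp
  hence "- (1/2) * ln t \<ge> 0" by simp
  thus "t powr (-1/2) \<ge> 1" unfolding e by simp
  have "1 / exp (- (1/2) * ln t) = exp ((1/2) * ln t)" by (simp add: exp_minus field_simps)
  thus "1 - 1 / t powr (-1/2) = 1 - t powr (1/2)" unfolding e using t by (simp add: powr_def)
qed

theorem theorem4:
  fixes a b :: real
  assumes ha: "a > 0" and hb: "b > 1"
  defines "\<delta> \<equiv> (a + 1) / (a + b)"
      and "\<delta>' \<equiv> a / (a + b - 1)"
  shows "rho (beta_dist a b) (gamma_dist a (a + b)) \<le> ennreal ((1 - \<delta>) powr (-1/2))
       \<and> d_TV (beta_dist a b) (gamma_dist a (a + b)) \<le> 1 - (1 - \<delta>) powr (1/2)
       \<and> 1 - (1 - \<delta>) powr (1/2) < \<delta> / (2 - \<delta>)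
       \<and> (\<forall>c>0. rho (beta_dist a b) (gamma_dist a c)
                  \<ge> rho (beta_dist a b) (gamma_dist a (a + b - 1)))
       \<and> \<delta>' < \<delta>
       \<and> rho (beta_dist a b) (gamma_dist a (a + b - 1)) \<le> ennreal ((1 - \<delta>') powr (-1/2))
       \<and> d_TV (beta_dist a b) (gamma_dist a (a + b - 1)) \<le> 1 - (1 - \<delta>') powr (1/2)
       \<and> 1 - (1 - \<delta>') powr (1/2) < \<delta>' / (2 - \<delta>')"
proof -
  have d01: "0 < \<delta>" "\<delta> < 1" using ha hb by (auto simp: \<delta>_def field_simps)
  have d'01: "0 < \<delta>'" "\<delta>' < 1" using ha hb by (auto simp: \<delta>'_def field_simps)
  have t1: "0 < 1 - \<delta>" "1 - \<delta> < 1" using d01 by auto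
  have t2: "0 < 1 - \<delta>'" "1 - \<delta>' < 1" using d'01 by auto
  have c1: "a + b > 0" and c2: "a + b - 1 > 0" using ha hb by auto
  define M1 where "M1 = (1 - \<delta>) powr (-1/2)"
  define M2 where "M2 = (1 - \<delta>') powr (-1/2)"
  have bd1: "exp (Lf a b (a+b) x) \<le> M1" if "0 < x" "x < 1" for x
  proof -
    have "Lf a b (a+b) x \<le> - (1/2) * ln (1 - \<delta>)"
      using Lf_bound1[OF ha hb that] unfolding \<delta>_def by simp
    thus ?thesis unfolding M1_def powr_facts(1)[OF t1] by simp
  qed
  have bd2: "exp (Lf a b (a+b-1) x) \<le> M2" if "0 < x" "x < 1" for x
  proof -
    have "Lf a b (a+b-1) x \<le> - (1/2) * ln (1 - \<delta>')"
      using Lf_bound2a[OF ha hb that(2)] Lf_bound2b[OF ha hb] unfolding \<delta>'_def by linarith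
    thus ?thesis unfolding M2_def powr_facts(1)[OF t2] by simp
  qed
  have M1: "M1 \<ge> 1" unfolding M1_def by (rule powr_facts(2)[OF t1])
  have M2: "M2 \<ge> 1" unfolding M2_def by (rule powr_facts(2)[OF t2])
  have P1: "rho (beta_dist a b) (gamma_dist a (a + b)) \<le> ennreal M1"
    by (rule rho_upper[OF ha hb c1 _ bd1]) (use M1 in auto)
  have P2: "d_TV (beta_dist a b) (gamma_dist a (a + b)) \<le> 1 - (1 - \<delta>) powr (1/2)"
    using dTV_upper[OF ha hb c1 M1 bd1] unfolding M1_def powr_facts(3)[OF t1] .
  have P3: "1 - (1 - \<delta>) powr (1/2) < \<delta> / (2 - \<delta>)" by (rule sqrt_ineq[OF d01])
  have P6: "rho (beta_dist a b) (gamma_dist a (a + b - 1)) \<le> ennreal M2"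
    by (rule rho_upper[OF ha hb c2 _ bd2]) (use M2 in auto)
  have P7: "d_TV (beta_dist a b) (gamma_dist a (a + b - 1)) \<le> 1 - (1 - \<delta>') powr (1/2)"
    using dTV_upper[OF ha hb c2 M2 bd2] unfolding M2_def powr_facts(3)[OF t2] .
  have P8: "1 - (1 - \<delta>') powr (1/2) < \<delta>' / (2 - \<delta>')" by (rule sqrt_ineq[OF d'01])
  have P5: "\<delta>' < \<delta>"
  proof -
    have "a * (a + b) < (a + 1) * (a + b - 1)" using hb by (simp add: algebra_simps)
    thus ?thesis unfolding \<delta>_def \<delta>'_def using c1 c2 by (simp add: divide_simps)
  qed
  have P4: "\<forall>c>0. rho (beta_dist a b) (gamma_dist a c)
                  \<ge> rho (beta_dist a b) (gamma_dist a (a + b - 1))"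
  proof (intro allI impI)
    fix c :: real assume c: "c > 0"
    show "rho (beta_dist a b) (gamma_dist a c) \<ge> rho (beta_dist a b) (gamma_dist a (a + b - 1))"
    proof (cases "c = a + b - 1")
      case True thus ?thesis by simp
    next
      case False
      define K where "K = exp (Lf a b (a+b-1) (a/(a+b-1)))"
      have "rho (beta_dist a b) (gamma_dist a (a + b - 1)) \<le> ennreal K"
        by (rule rho_upper[OF ha hb c2]) (use Lf_bound2a[OF ha hb] in \<open>auto simp: K_def\<close>)
      also have "\<dots> \<le> rho (beta_dist a b) (gamma_dist a c)"
        unfolding K_def by (rule rho_lower[OF ha hb c False])
      finally show ?thesis .
    qed
  qed
  show ?thesis using P1 P2 P3 P4 P5 P6 P7 P8 unfolding M1_def M2_def by blast
qed


end
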